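(* Let $n\geqslant2$, $\lambda>0$, distinct points $p_1,\ldots,p_M\in\mathbb{Z}^n$ and positive integers $n_1,\ldots,n_M$ be given, and let $g=4\pi\sum_{j=1}^Mn_j\delta_{p_j}$. Let $\Omega_0\subset\mathbb{Z}^n$ be a finite set containing $\{p_j\}_{j=1}^M$ and let $\Omega$ be a finite connected subset with $\Omega_0\subset\Omega$. Fix a constant $K>2\lambda$. Let $u_0=0$ and, for $k\geqslant1$, let $u_k:\overline{\Omega}\to\mathbb{R}$ solve $$(\Delta-K)u_k=\lambda e^{u_{k-1}}(e^{u_{k-1}}-1)+g-Ku_{k-1}\ \text{ on }\Omega,\qquad u_k=0\ \text{ on }\delta\Omega.$$ Then for each $k$, $u_k$ is uniquely defined, and $0=u_0\geqslant u_1\geqslant u_2\geqslant\cdots$ on $\overline\Omega$.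
   Context: $\mathbb{Z}^n$ is the integer lattice graph with $x\sim y$ iff $\sum_i|x_i-y_i|=1$. For a finite $\Omega\subset\mathbb{Z}^n$, $\delta\Omega=\{y\in\mathbb{Z}^n\setminus\Omega:\exists x\in\Omega,\ y\sim x\}$ and $\overline\Omega=\Omega\cup\delta\Omega$. For $u:\overline\Omega\to\mathbb{R}$ and $x\in\Omega$, $\Delta u(x)=\sum_{y\sim x}(u(y)-u(x))$. $\delta_p$ is the function equal to $1$ at $p$ and $0$ elsewhere. *)

theory Defs
  imports "HOL-Analysis.Analysis"
begin

definition lat_adj :: "int ^ 'n \<Rightarrow> int ^ 'n \<Rightarrow> bool" where
  "lat_adj x y \<longleftrightarrow> (\<Sum>i\<in>UNIV. \<bar>x $ i - y $ i\<bar>) = 1"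

definition lat_bdry :: "(int ^ 'n) set \<Rightarrow> (int ^ 'n) set" where
  "lat_bdry \<Omega> = {y. y \<notin> \<Omega> \<and> (\<exists>x\<in>\<Omega>. lat_adj y x)}"

definition lat_closure :: "(int ^ 'n) set \<Rightarrow> (int ^ 'n) set" where
  "lat_closure \<Omega> = \<Omega> \<union> lat_bdry \<Omega>"

definition lat_laplacian :: "(int ^ 'n \<Rightarrow> real) \<Rightarrow> int ^ 'n \<Rightarrow> real" where
  "lat_laplacian u x = (\<Sum>y\<in>{y. lat_adj y x}. (u y - u x))"

definition lat_connected :: "(int ^ 'n) set \<Rightarrow> bool" where
  "lat_connected \<Omega> \<longleftrightarrow>
     (\<forall>x\<in>\<Omega>. \<forall>y\<in>\<Omega>. (\<lambda>a b. a \<in> \<Omega> \<and> b \<in> \<Omega> \<and> lat_adj a b)\<^sup>*\<^sup>* x y)"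

definition iter_solves ::
  "real \<Rightarrow> real \<Rightarrow> (int ^ 'n \<Rightarrow> real) \<Rightarrow> (int ^ 'n) set \<Rightarrow>
   (int ^ 'n \<Rightarrow> real) \<Rightarrow> (int ^ 'n \<Rightarrow> real) \<Rightarrow> bool" where
  "iter_solves K lam g \<Omega> v u \<longleftrightarrow>
     (\<forall>x\<in>\<Omega>. lat_laplacian u x - K * u x
               = lam * exp (v x) * (exp (v x) - 1) + g x - K * v x)
   \<and> (\<forall>y\<in>lat_bdry \<Omega>. u y = 0)"

end

theory Submission
  imports Defs
begin

lemma lap_diff: "lat_laplacian (\<lambda>x. a x - b x) x = lat_laplacian a x - lat_laplacian b x"
  unfolding lat_laplacian_def by (simp add: sum_subtractf[symmetric] algebra_simps)

lemma maxp:
  assumes fin: "finite \<Omega>" and K: "K > 0"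
    and eq: "\<forall>x\<in>\<Omega>. lat_laplacian w x - K * w x \<ge> 0"
    and bd: "\<forall>y\<in>lat_bdry \<Omega>. w y \<le> 0"
  shows "\<forall>x\<in>\<Omega>. w x \<le> 0"
proof (rule ccontr)
  assume "\<not> ?thesis"
  then obtain x1 where x1: "x1 \<in> \<Omega>" "w x1 > 0" by auto
  define m where "m = Max (w ` \<Omega>)"
  have ne: "w ` \<Omega> \<noteq> {}" using x1 by auto
  have "m \<in> w ` \<Omega>" unfolding m_def using fin ne by (intro Max_in) auto
  then obtain x0 where x0: "x0 \<in> \<Omega>" "w x0 = m" by auto
  have ge: "\<forall>y\<in>\<Omega>. w y \<le> w x0" using fin x0 unfolding m_def by auto
  have pos: "w x0 > 0" using ge x1 by force
  have "\<forall>y\<in>{y. lat_adj y x0}. w y - w x0 \<le> 0"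
  proof
    fix y assume y: "y \<in> {y. lat_adj y x0}"
    show "w y - w x0 \<le> 0"
    proof (cases "y \<in> \<Omega>")
      case True then show ?thesis using ge by auto
    next
      case False
      then have "y \<in> lat_bdry \<Omega>" using y x0 unfolding lat_bdry_def by auto
      then show ?thesis using bd pos by force
    qed
  qed
  then have "lat_laplacian w x0 \<le> 0" unfolding lat_laplacian_def by (intro sum_nonpos) auto
  moreover have "K * w x0 > 0" using K pos by simp
  ultimately show False using eq x0 by force
qed

lemma solve:
  fixes F :: "int ^ 'n \<Rightarrow> real"
  assumes fin: "finite \<Omega>" and K: "K > 0"
  shows "\<exists>u. (\<forall>x\<in>\<Omega>. lat_laplacian u x - K * u x = F x) \<and> (\<forall>x. x \<notin> \<Omega> \<longrightarrow> u x = 0)"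
proof -
  define N where "N x = {y. lat_adj y x}" for x :: "int ^ 'n"
  define T where "T f x = (if x \<in> \<Omega> then ((\<Sum>y\<in>N x. f y) - F x) / (real (card (N x)) + K) else 0)"
    for f :: "int ^ 'n \<Rightarrow> real" and x
  define Dm where "Dm = (\<Sum>x\<in>\<Omega>. real (card (N x)))"
  define c where "c = Dm / (Dm + K)"
  have Dm0: "Dm \<ge> 0" unfolding Dm_def by (simp add: sum_nonneg)
  have c0: "0 \<le> c" "c < 1" unfolding c_def using Dm0 K by auto
  have contr: "\<bar>T f x - T g x\<bar> \<le> c * \<delta>" if H: "\<forall>y. \<bar>f y - g y\<bar> \<le> \<delta>" for f g \<delta> x
  proof -
    have d0: "\<delta> \<ge> 0" using H by (meson abs_ge_zero order_trans)
    show ?thesis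
    proof (cases "x \<in> \<Omega>")
      case False then show ?thesis unfolding T_def using d0 c0 by simp
    next
      case True
      define d where "d = real (card (N x))"
      have dK: "d + K > 0" using K unfolding d_def by simp
      have dDm: "d \<le> Dm" unfolding d_def Dm_def using fin True
        by (intro member_le_sum) auto
      have "T f x - T g x = (\<Sum>y\<in>N x. f y - g y) / (d + K)"
        unfolding T_def d_def using True by (simp add: sum_subtractf diff_divide_distrib)
      then have "\<bar>T f x - T g x\<bar> = \<bar>\<Sum>y\<in>N x. f y - g y\<bar> / (d + K)" using dK by simp
      also have "\<dots> \<le> (\<Sum>y\<in>N x. \<bar>f y - g y\<bar>) / (d + K)"
        using dK by (intro divide_right_mono sum_abs) auto
      also have "\<dots> \<le> (\<Sum>y\<in>N x. \<delta>) / (d + K)"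
        using dK H by (intro divide_right_mono sum_mono) auto
      also have "\<dots> = d * \<delta> / (d + K)" unfolding d_def by simp
      also have "\<dots> \<le> c * \<delta>"
      proof -
        have "d * (Dm + K) \<le> Dm * (d + K)" using dDm K by (simp add: algebra_simps)
        then have "d / (d + K) \<le> Dm / (Dm + K)" using dK Dm0 K
          by (simp add: divide_simps)
        then have "d / (d + K) * \<delta> \<le> c * \<delta>" unfolding c_def using d0 by (rule mult_right_mono)
        then show ?thesis by simp
      qed
      finally show ?thesis .
    qed
  qed
  define f where "f m = (T ^^ m) (\<lambda>x. 0)" for m
  have fS: "f (Suc m) = T (f m)" for m by (simp add: f_def)
  have f0: "f 0 = (\<lambda>x. 0)" by (simp add: f_def)
  define B where "B = (\<Sum>x\<in>\<Omega>. \<bar>f 1 x\<bar>)"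
  have B0: "B \<ge> 0" unfolding B_def by (simp add: sum_nonneg)
  have fout: "x \<notin> \<Omega> \<Longrightarrow> f m x = 0" for m x
    by (cases m) (auto simp: f0 fS T_def)
  have f1: "\<bar>f 1 x - f 0 x\<bar> \<le> B" for x
  proof (cases "x \<in> \<Omega>")
    case True then show ?thesis unfolding B_def f0 using fin
      using member_le_sum[of x \<Omega> "\<lambda>x. \<bar>f 1 x\<bar>"] by simp
  next
    case False then show ?thesis using fout B0 f0 by simp
  qed
  have bnd: "\<bar>f (Suc m) x - f m x\<bar> \<le> B * c ^ m" for m x
  proof (induction m arbitrary: x)
    case 0 then show ?case using f1 by simp
  next
    case (Suc m)
    have "\<bar>T (f (Suc m)) x - T (f m) x\<bar> \<le> c * (B * c ^ m)" by (rule contr) (use Suc in auto)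
    then show ?case by (simp add: fS[of "Suc m"] fS[of m] algebra_simps)
  qed
  have summ: "summable (\<lambda>m. f (Suc m) x - f m x)" for x
  proof (rule summable_comparison_test)
    show "\<exists>N. \<forall>n\<ge>N. norm (f (Suc n) x - f n x) \<le> B * c ^ n" using bnd by auto
    show "summable (\<lambda>n. B * c ^ n)" using c0 by (intro summable_mult summable_geometric) auto
  qed
  define L where "L x = (\<Sum>m. f (Suc m) x - f m x)" for x
  have lim: "(\<lambda>m. f m x) \<longlonglongrightarrow> L x" for x
  proof -
    have "(\<lambda>n. \<Sum>i<n. f (Suc i) x - f i x) \<longlonglongrightarrow> L x" unfolding L_def by (rule summable_LIMSEQ[OF summ])
    moreover have "(\<Sum>i<n. f (Suc i) x - f i x) = f n x" for n
      using sum_lessThan_telescope[of "\<lambda>i. f i x" n] by (simp add: f0)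
    ultimately show ?thesis by simp
  qed
  show ?thesis
  proof (intro exI conjI ballI allI impI)
    fix x assume "x \<notin> \<Omega>"
    then have "(\<lambda>m. f m x) \<longlonglongrightarrow> 0" using fout by simp
    then show "L x = 0" using lim LIMSEQ_unique by blast
  next
    fix x assume xO: "x \<in> \<Omega>"
    define d where "d = real (card (N x))"
    have dK: "d + K > 0" using K unfolding d_def by simp
    have "(\<lambda>m. f (Suc m) x) \<longlonglongrightarrow> L x" using lim by (rule LIMSEQ_Suc)
    moreover have "(\<lambda>m. f (Suc m) x) = (\<lambda>m. ((\<Sum>y\<in>N x. f m y) - F x) / (d + K))"
      using xO by (simp add: fS T_def d_def)
    moreover have "(\<lambda>m. ((\<Sum>y\<in>N x. f m y) - F x) / (d + K)) \<longlonglongrightarrow> ((\<Sum>y\<in>N x. L y) - F x) / (d + K)"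
      by (intro tendsto_intros lim) (use dK in auto)
    ultimately have Lx: "L x = ((\<Sum>y\<in>N x. L y) - F x) / (d + K)" using LIMSEQ_unique by metis
    then have "(d + K) * L x = (\<Sum>y\<in>N x. L y) - F x" using dK by (simp add: field_simps)
    moreover have "lat_laplacian L x = (\<Sum>y\<in>N x. L y) - d * L x"
      unfolding lat_laplacian_def N_def d_def by (simp add: sum_subtractf)
    ultimately show "lat_laplacian L x - K * L x = F x" by (simp add: algebra_simps)
  qed
qed

lemma phi_mono:
  fixes lam K s t :: real
  assumes "0 < lam" "lam \<le> K" "s \<le> t" "t \<le> 0"
  shows "lam * exp t * (exp t - 1) - K * t \<le> lam * exp s * (exp s - 1) - K * s"
proof -
  define a where "a = exp s"
  define b where "b = exp t"
  have a0: "0 < a" unfolding a_def by simp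
  have ab: "a \<le> b" unfolding a_def b_def using assms by simp
  have b1: "b \<le> 1" unfolding b_def using assms by simp
  have "b * (1 - exp (s - t)) = b - a"
    unfolding a_def b_def by (simp add: algebra_simps exp_add[symmetric])
  moreover have "b * (1 - exp (s - t)) \<le> 1 - exp (s - t)"
  proof -
    have "exp (s - t) \<le> 1" using assms by simp
    then have "0 \<le> 1 - exp (s - t)" by simp
    then have "b * (1 - exp (s - t)) \<le> 1 * (1 - exp (s - t))" using b1 by (rule mult_right_mono[rotated])
    then show ?thesis by simp
  qed
  moreover have "1 - exp (s - t) \<le> t - s" using exp_ge_add_one_self[of "s - t"] by linarith
  ultimately have bat: "b - a \<le> t - s" by linarith
  have key: "lam * ((b - a) * (a + b - 1)) \<le> K * (t - s)"
  proof (cases "a + b - 1 \<le> 0")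
    case True
    then have "(b - a) * (a + b - 1) \<le> 0" using ab by (simp add: mult_nonneg_nonpos)
    then have "lam * ((b - a) * (a + b - 1)) \<le> 0" using assms by (simp add: mult_nonneg_nonpos)
    also have "0 \<le> K * (t - s)" using assms by simp
    finally show ?thesis .
  next
    case False
    have "(b - a) * (a + b - 1) \<le> (b - a) * 1" using ab b1 a0 by (intro mult_left_mono) auto
    also have "\<dots> \<le> t - s" using bat by simp
    finally have "lam * ((b - a) * (a + b - 1)) \<le> lam * (t - s)" using assms by simp
    also have "\<dots> \<le> K * (t - s)" using assms by (intro mult_right_mono) auto
    finally show ?thesis .
  qed
  have "lam * b * (b - 1) - K * t - (lam * a * (a - 1) - K * s) = lam * ((b - a) * (a + b - 1)) - K * (t - s)"
    by (simp add: algebra_simps)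
  then show ?thesis using key unfolding a_def b_def by linarith
qed

theorem lemma3p1:
  fixes lam K :: real and M :: nat
    and p :: "nat \<Rightarrow> int ^ 'n" and nn :: "nat \<Rightarrow> nat"
    and \<Omega>0 \<Omega> :: "(int ^ 'n) set" and g :: "int ^ 'n \<Rightarrow> real"
  assumes "CARD('n) \<ge> 2"
    and "lam > 0"
    and "inj_on p {1..M}"
    and "\<forall>j\<in>{1..M}. nn j > 0"
    and "g = (\<lambda>x. 4 * pi * (\<Sum>j=1..M. real (nn j) * (if x = p j then 1 else 0)))"
    and "finite \<Omega>0" and "p ` {1..M} \<subseteq> \<Omega>0"
    and "finite \<Omega>" and "lat_connected \<Omega>" and "\<Omega>0 \<subseteq> \<Omega>"
    and "K > 2 * lam"
  shows "\<exists>u :: nat \<Rightarrow> int ^ 'n \<Rightarrow> real.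
           u 0 = (\<lambda>x. 0)
         \<and> (\<forall>k\<ge>1. iter_solves K lam g \<Omega> (u (k - 1)) (u k))
         \<and> (\<forall>k\<ge>1. \<forall>w. iter_solves K lam g \<Omega> (u (k - 1)) w
                 \<longrightarrow> (\<forall>x\<in>lat_closure \<Omega>. w x = u k x))
         \<and> (\<forall>k. \<forall>x\<in>lat_closure \<Omega>. u (Suc k) x \<le> u k x)"
proof -
  have fin: "finite \<Omega>" by fact
  have K: "K > 0" "lam \<le> K" using assms(2,11) by auto
  have gnn: "g x \<ge> 0" for x unfolding assms(5) by (simp add: sum_nonneg)
  define F where "F v x = lam * exp (v x) * (exp (v x) - 1) + g x - K * v x"
    for v :: "int ^ 'n \<Rightarrow> real" and x
  define S where "S G = (SOME u. (\<forall>x\<in>\<Omega>. lat_laplacian u x - K * u x = G x) \<and> (\<forall>x. x \<notin> \<Omega> \<longrightarrow> u x = 0))"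
    for G :: "int ^ 'n \<Rightarrow> real"
  have S: "(\<forall>x\<in>\<Omega>. lat_laplacian (S G) x - K * S G x = G x) \<and> (\<forall>x. x \<notin> \<Omega> \<longrightarrow> S G x = 0)" for G
    unfolding S_def using someI_ex[OF solve[OF fin K(1), of G]] by blast
  define u where "u = rec_nat (\<lambda>x. 0) (\<lambda>k v. S (F v))"
  have u0: "u 0 = (\<lambda>x. 0)" by (simp add: u_def)
  have uS: "u (Suc k) = S (F (u k))" for k by (simp add: u_def)
  have bdO: "y \<in> lat_bdry \<Omega> \<Longrightarrow> y \<notin> \<Omega>" for y unfolding lat_bdry_def by auto
  have uout: "x \<notin> \<Omega> \<Longrightarrow> u k x = 0" for k x
    by (cases k) (auto simp: u0 uS S)
  have solves: "iter_solves K lam g \<Omega> (u k) (u (Suc k))" for k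
    unfolding iter_solves_def using S[of "F (u k)"] bdO by (auto simp: uS F_def)
  have uniq: "\<forall>x\<in>lat_closure \<Omega>. w x = u (Suc k) x" if H: "iter_solves K lam g \<Omega> (u k) w" for k w
  proof -
    have A: "\<forall>x\<in>\<Omega>. lat_laplacian w x - K * w x = lat_laplacian (u (Suc k)) x - K * u (Suc k) x"
      using H solves[of k] unfolding iter_solves_def by auto
    have Bw: "\<forall>y\<in>lat_bdry \<Omega>. w y = 0" using H unfolding iter_solves_def by auto
    have Bu: "\<forall>y\<in>lat_bdry \<Omega>. u (Suc k) y = 0" using uout bdO by auto
    have 1: "\<forall>x\<in>\<Omega>. w x - u (Suc k) x \<le> 0"
      by (rule maxp[OF fin K(1)]) (use A Bw Bu in \<open>auto simp: lap_diff algebra_simps\<close>)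
    have 2: "\<forall>x\<in>\<Omega>. u (Suc k) x - w x \<le> 0"
      by (rule maxp[OF fin K(1)]) (use A Bw Bu in \<open>auto simp: lap_diff algebra_simps\<close>)
    show ?thesis using 1 2 Bw Bu unfolding lat_closure_def by force
  qed
  have mono: "(\<forall>x. u (Suc k) x \<le> u k x) \<and> (\<forall>x. u k x \<le> 0)" for k
  proof (induction k)
    case 0
    have E: "\<forall>x\<in>\<Omega>. lat_laplacian (u 1) x - K * u 1 x = g x"
      using S[of "F (u 0)"] by (simp add: uS u0 F_def)
    have "\<forall>x\<in>\<Omega>. u 1 x \<le> 0"
      by (rule maxp[OF fin K(1)]) (use E gnn uout bdO in auto)
    then have "\<forall>x. u 1 x \<le> 0" using uout by (metis order_refl)
    then show ?case by (simp add: u0)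
  next
    case (Suc k)
    have le0: "\<forall>x. u (Suc k) x \<le> 0" using Suc by (meson order_trans)
    have E: "\<forall>x\<in>\<Omega>. lat_laplacian (\<lambda>x. u (Suc (Suc k)) x - u (Suc k) x) x
                 - K * (u (Suc (Suc k)) x - u (Suc k) x) = F (u (Suc k)) x - F (u k) x"
      using S[of "F (u (Suc k))"] S[of "F (u k)"] by (auto simp: uS lap_diff algebra_simps)
    have P: "F (u (Suc k)) x - F (u k) x \<ge> 0" for x
      using phi_mono[OF assms(2) K(2), of "u (Suc k) x" "u k x"] Suc
      unfolding F_def by auto
    have "\<forall>x\<in>\<Omega>. u (Suc (Suc k)) x - u (Suc k) x \<le> 0"
      by (rule maxp[OF fin K(1)]) (use E P uout bdO in auto)
    then have "\<forall>x. u (Suc (Suc k)) x \<le> u (Suc k) x" using uout by (metis diff_le_0_iff_le order_refl)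
    then show ?case using le0 by simp
  qed
  show ?thesis
  proof (intro exI conjI allI impI)
    show "u 0 = (\<lambda>x. 0)" by (rule u0)
  next
    fix k :: nat assume "k \<ge> 1"
    then obtain j where "k = Suc j" by (cases k) auto
    then show "iter_solves K lam g \<Omega> (u (k - 1)) (u k)" using solves by simp
  next
    fix k :: nat and w assume "k \<ge> 1" "iter_solves K lam g \<Omega> (u (k - 1)) w"
    moreover obtain j where "k = Suc j" using \<open>k \<ge> 1\<close> by (cases k) auto
    ultimately show "\<forall>x\<in>lat_closure \<Omega>. w x = u k x" using uniq by simp
  next
    fix k show "\<forall>x\<in>lat_closure \<Omega>. u (Suc k) x \<le> u k x" using mono by blast
  qed
qed

end
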